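(* Let $p_0\ge1$, $q_0\ge0$ be integers and $(X_t)_{t\in\mathbb{Z}}$ a stationary ARMA$(p_0,q_0)$ process $\Phi(B)X_t=\Theta(B)\epsilon_t$, where $(\epsilon_t)$ has mean $0$ and finite variance, $BX_t=X_{t-1}$, $\Phi(z)=1+\phi_1z+\dots+\phi_{p_0}z^{p_0}$ ($\phi_{p_0}\ne0$), $\Theta(z)=1+\theta_1z+\dots+\theta_{q_0}z^{q_0}$ ($\theta_{q_0}\ne0$), $\Phi,\Theta$ without common roots, and $X$ causal, i.e. $\Phi(z)\ne0$ for all $z\in\mathbb{C}$ with $|z|\le1$. Then for any integer $r>0$, if $\mathbb{E}|X_0|^{2r}<\infty$, the process $(|X_t|^r)_{t\in\mathbb{Z}}$ is geometrically $L_2$-NED on $(\epsilon_t)$.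
   Context: $\mathcal{F}_{\epsilon,s,t}=\sigma(\epsilon_u:s\le u\le t)$. A stationary process $(Y_n)$ is $L_2$-NED on $(\epsilon_n)$ with constants $\nu(k)$ if $\|Y_0-\mathbb{E}[Y_0\mid\mathcal{F}_{\epsilon,-k,k}]\|_2\le\nu(k)$ for $k\ge0$ with $\nu(k)\to0$; it is geometrically $L_2$-NED if one can take $\nu(k)=O(e^{-\delta k})$ for some $\delta>0$. *)

theory Defs
  imports "HOL-Probability.Probability"
begin

definition stationary_proc :: "'a measure \<Rightarrow> (int \<Rightarrow> 'a \<Rightarrow> real) \<Rightarrow> bool" where
  "stationary_proc M Y \<longleftrightarrow>
     (\<forall>t. Y t \<in> borel_measurable M) \<and>
     (\<forall>h::int. distr M (Pi\<^sub>M UNIV (\<lambda>_. borel)) (\<lambda>\<omega> t. Y (t + h) \<omega>)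
             = distr M (Pi\<^sub>M UNIV (\<lambda>_. borel)) (\<lambda>\<omega> t. Y t \<omega>))"

definition gen_sigma :: "'a measure \<Rightarrow> (int \<Rightarrow> 'a \<Rightarrow> real) \<Rightarrow> int \<Rightarrow> int \<Rightarrow> 'a measure" where
  "gen_sigma M e s t =
     sigma (space M) {e u -` B \<inter> space M | u B. s \<le> u \<and> u \<le> t \<and> B \<in> sets borel}"

definition ned_err :: "'a measure \<Rightarrow> (int \<Rightarrow> 'a \<Rightarrow> real) \<Rightarrow> (int \<Rightarrow> 'a \<Rightarrow> real) \<Rightarrow> nat \<Rightarrow> real" where
  "ned_err M Y e k =
     sqrt (\<integral>\<omega>. (Y 0 \<omega> - real_cond_exp M (gen_sigma M e (- int k) (int k)) (Y 0) \<omega>)\<^sup>2 \<partial>M)"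

definition L2_NED :: "'a measure \<Rightarrow> (int \<Rightarrow> 'a \<Rightarrow> real) \<Rightarrow> (int \<Rightarrow> 'a \<Rightarrow> real) \<Rightarrow> (nat \<Rightarrow> real) \<Rightarrow> bool" where
  "L2_NED M Y e \<nu> \<longleftrightarrow>
     stationary_proc M Y \<and>
     integrable M (\<lambda>\<omega>. (Y 0 \<omega>)\<^sup>2) \<and>
     (\<forall>k. ned_err M Y e k \<le> \<nu> k) \<and> \<nu> \<longlonglongrightarrow> 0"

definition geom_L2_NED :: "'a measure \<Rightarrow> (int \<Rightarrow> 'a \<Rightarrow> real) \<Rightarrow> (int \<Rightarrow> 'a \<Rightarrow> real) \<Rightarrow> bool" where
  "geom_L2_NED M Y e \<longleftrightarrow>
     (\<exists>\<nu> \<delta>. \<delta> > 0 \<and> L2_NED M Y e \<nu> \<and> \<nu> \<in> O(\<lambda>k. exp (- \<delta> * real k)))"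

definition lagpoly :: "(nat \<Rightarrow> real) \<Rightarrow> nat \<Rightarrow> complex \<Rightarrow> complex" where
  "lagpoly c n z = 1 + (\<Sum>j=1..n. complex_of_real (c j) * z ^ j)"

end

theory Submission
  imports Defs "HOL-Complex_Analysis.Complex_Analysis"
begin

lemma ar_inverse:
  fixes \<phi> :: "nat \<Rightarrow> real" and p :: nat and a :: "nat \<Rightarrow> real"
  assumes root: "\<forall>z. cmod z \<le> 1 \<longrightarrow> lagpoly \<phi> p z \<noteq> 0"
    and a_def: "\<And>k. a k = (if k = 0 then 1 else if k \<le> p then \<phi> k else 0)"
  shows "\<exists>\<psi> B \<rho>. 0 < \<rho> \<and> \<rho> < 1 \<and> 0 \<le> B \<and> (\<forall>j. \<bar>\<psi> j\<bar> \<le> B * \<rho> ^ j) \<and>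
           (\<forall>m. (\<Sum>j\<le>m. \<psi> j * a (m - j)) = (if m = 0 then 1 else 0))"
proof -
  define c where "c k = complex_of_real (a k)" for k
  define pp where "pp = (\<Sum>k\<le>p. monom (c k) k)"
  have coeff: "coeff pp k = (if k \<le> p then c k else 0)" for k
    unfolding pp_def by (simp add: coeff_sum coeff_monom)
  have coeff': "coeff pp k = complex_of_real (a k)" for k
    using coeff[of k] by (simp add: c_def a_def)
  have "poly pp z = (\<Sum>k\<le>p. c k * z ^ k)" for z
    unfolding pp_def by (simp add: poly_sum poly_monom)
  also have "\<dots> z = c 0 + (\<Sum>k=1..p. c k * z ^ k)" for z
    by (simp add: sum.atMost_shift atMost_atLeast0 sum.atLeast_Suc_atMost)
  finally have polyeq: "poly pp z = lagpoly \<phi> p z" for z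
    unfolding lagpoly_def c_def a_def by simp
  have "pp \<noteq> 0" using coeff'[of 0] by (auto simp: a_def)
  hence fin: "finite {z. poly pp z = 0}" by (rule poly_roots_finite)
  define R where "R = Min (insert 2 (cmod ` {z. poly pp z = 0}))"
  have R1: "R > 1"
    unfolding R_def using fin root polyeq by (subst Min_gr_iff) (auto simp: not_le)
  have Rnz: "poly pp z \<noteq> 0" if "cmod z < R" for z
  proof
    assume "poly pp z = 0"
    hence "R \<le> cmod z" unfolding R_def using fin by (intro Min_le) auto
    with that show False by simp
  qed
  define P where "P = fps_of_poly pp"
  have "fps_conv_radius (inverse P) \<ge> min (ereal R) (fps_conv_radius P)"
    by (rule fps_conv_radius_inverse) (auto simp: P_def Rnz)
  hence rad: "fps_conv_radius (inverse P) \<ge> ereal R" by (simp add: P_def)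
  define s where "s = (1 + R) / 2"
  have s1: "s > 1" "s < R" using R1 by (auto simp: s_def)
  have "norm (complex_of_real s) < fps_conv_radius (inverse P)"
  proof -
    have "ereal s < ereal R" using s1 by simp
    also note rad
    finally show ?thesis using s1 by simp
  qed
  hence "summable (\<lambda>n. fps_nth (inverse P) n * complex_of_real s ^ n)"
    by (rule summable_fps)
  hence "(\<lambda>n. fps_nth (inverse P) n * complex_of_real s ^ n) \<longlonglongrightarrow> 0"
    by (rule summable_LIMSEQ_zero)
  hence "Bseq (\<lambda>n. fps_nth (inverse P) n * complex_of_real s ^ n)"
    by (intro convergent_imp_Bseq convergentI)
  then obtain B where B: "B > 0" "\<And>n. norm (fps_nth (inverse P) n * complex_of_real s ^ n) \<le> B"
    by (auto simp: Bseq_def)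
  define \<psi> where "\<psi> j = Re (fps_nth (inverse P) j)" for j
  have bnd: "\<bar>\<psi> j\<bar> \<le> B * (1/s) ^ j" for j
  proof -
    have "\<bar>\<psi> j\<bar> \<le> norm (fps_nth (inverse P) j)" unfolding \<psi>_def by (rule abs_Re_le_cmod)
    also have "\<dots> = norm (fps_nth (inverse P) j * complex_of_real s ^ j) / s ^ j"
      using s1 by (simp add: norm_mult norm_power)
    also have "\<dots> \<le> B / s ^ j" using s1 B by (intro divide_right_mono) auto
    finally show ?thesis by (simp add: power_divide)
  qed
  have P0: "fps_nth P 0 \<noteq> 0" using coeff'[of 0] by (simp add: P_def a_def)
  have conv: "(\<Sum>j\<le>m. \<psi> j * a (m - j)) = (if m = 0 then 1 else 0)" for m
  proof -
    have "fps_nth (inverse P * P) m = (if m = 0 then 1 else 0)"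
      using inverse_mult_eq_1[OF P0] by simp
    hence "(\<Sum>i=0..m. fps_nth (inverse P) i * complex_of_real (a (m - i))) = (if m = 0 then 1 else 0)"
      by (simp add: fps_mult_nth P_def coeff')
    hence "Re (\<Sum>i=0..m. fps_nth (inverse P) i * complex_of_real (a (m - i))) = (if m = 0 then 1 else 0)"
      by simp
    thus ?thesis by (simp add: \<psi>_def atMost_atLeast0)
  qed
  show ?thesis
    using s1 B bnd conv
    by (intro exI[of _ \<psi>] exI[of _ B] exI[of _ "1/s"]) auto
qed

lemma ar_expand:
  fixes a \<psi> y v :: "nat \<Rightarrow> real" and p n :: nat
  assumes a0: "\<forall>k>p. a k = 0"
    and conv: "\<forall>m. (\<Sum>j\<le>m. \<psi> j * a (m - j)) = (if m = 0 then 1 else 0)"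
    and eq: "\<forall>j<n. v j = (\<Sum>i\<le>p. a i * y (j + i))"
  shows "(\<Sum>j<n. \<psi> j * v j) = (if n > 0 then y 0 else 0) + (\<Sum>m\<in>{n..<n+p}. (\<Sum>j<n. \<psi> j * a (m - j)) * y m)"
  using eq
proof (induction n)
  case 0
  then show ?case by simp
next
  case (Suc n)
  define D where "D n m = (\<Sum>j<n. \<psi> j * a (m - j))" for n m
  have IH: "(\<Sum>j<n. \<psi> j * v j) = (if n > 0 then y 0 else 0) + (\<Sum>m\<in>{n..<n+p}. D n m * y m)"
    using Suc by (simp add: D_def)
  have vn: "v n = (\<Sum>i\<le>p. a i * y (n + i))" using Suc.prems by simp
  have sh: "(\<Sum>i\<le>p. a i * y (n + i)) = (\<Sum>m\<in>{n..n+p}. a (m - n) * y m)"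
  proof -
    have "(\<Sum>m\<in>{n..n+p}. a (m - n) * y m) = (\<Sum>i\<in>{0..p}. a i * y (i + n))"
      by (rule sum.reindex_bij_witness[of _ "\<lambda>i. i + n" "\<lambda>m. m - n"]) auto
    thus ?thesis by (simp add: atMost_atLeast0 add.commute)
  qed
  have Dlast: "D n (n + p) = 0" unfolding D_def using a0 by (intro sum.neutral) auto
  have "(\<Sum>m\<in>{n..<n+p}. D n m * y m) = (\<Sum>m\<in>{n..n+p}. D n m * y m)"
    using Dlast by (simp add: atLeastLessThanSuc_atLeastAtMost[symmetric])
  have "(\<Sum>m\<in>{n..<n+p}. D n m * y m) + \<psi> n * v n = (\<Sum>m\<in>{n..n+p}. D (Suc n) m * y m)"
  proof -
    have "\<psi> n * v n = (\<Sum>m\<in>{n..n+p}. \<psi> n * a (m - n) * y m)"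
      unfolding vn sh by (simp add: sum_distrib_left mult.assoc)
    moreover have "D (Suc n) m = D n m + \<psi> n * a (m - n)" for m
      unfolding D_def by simp
    ultimately show ?thesis using \<open>(\<Sum>m\<in>{n..<n+p}. D n m * y m) = (\<Sum>m\<in>{n..n+p}. D n m * y m)\<close>
      by (simp add: sum.distrib[symmetric] distrib_right)
  qed
  also have "\<dots> = D (Suc n) n * y n + (\<Sum>m\<in>{Suc n..<Suc n+p}. D (Suc n) m * y m)"
  proof -
    have "{n..n+p} = insert n {Suc n..<Suc n+p}" by auto
    thus ?thesis by simp
  qed
  also have "D (Suc n) n = (if n = 0 then 1 else 0)"
    using conv unfolding D_def by (simp add: lessThan_Suc_atMost)
  finally have "(\<Sum>m\<in>{n..<n+p}. D n m * y m) + \<psi> n * v n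
      = (if n = 0 then y n else 0) + (\<Sum>m\<in>{Suc n..<Suc n+p}. D (Suc n) m * y m)" by simp
  hence "(\<Sum>j<Suc n. \<psi> j * v j) = (if Suc n > 0 then y 0 else 0) + (\<Sum>m\<in>{Suc n..<Suc n+p}. D (Suc n) m * y m)"
    using IH by (cases "n = 0") auto
  then show ?case by (simp only: D_def)
qed

lemma D_bound:
  fixes a \<psi> :: "nat \<Rightarrow> real"
  assumes conv: "\<forall>m. (\<Sum>j\<le>m. \<psi> j * a (m - j)) = (if m = 0 then 1 else 0)"
    and psi: "\<forall>j. \<bar>\<psi> j\<bar> \<le> B * \<rho> ^ j" and rho: "0 \<le> \<rho>" "\<rho> \<le> 1"
    and A: "\<forall>k. \<bar>a k\<bar> \<le> A"
    and nm: "n \<le> m" "m < n + p" "0 < m"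
  shows "\<bar>\<Sum>j<n. \<psi> j * a (m - j)\<bar> \<le> real p * A * B * \<rho> ^ n"
proof -
  have split: "{..m} = {..<n} \<union> {n..m}" using nm by auto
  have "(\<Sum>j\<le>m. \<psi> j * a (m - j)) = (\<Sum>j<n. \<psi> j * a (m - j)) + (\<Sum>j\<in>{n..m}. \<psi> j * a (m - j))"
    unfolding split by (subst sum.union_disjoint) auto
  hence eq: "(\<Sum>j<n. \<psi> j * a (m - j)) = - (\<Sum>j\<in>{n..m}. \<psi> j * a (m - j))"
    using conv nm by simp
  have B0: "0 \<le> B" using psi[rule_format, of 0] by simp
  have "\<bar>\<Sum>j\<in>{n..m}. \<psi> j * a (m - j)\<bar> \<le> (\<Sum>j\<in>{n..m}. \<bar>\<psi> j * a (m - j)\<bar>)"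
    by (rule sum_abs)
  also have "\<dots> \<le> (\<Sum>j\<in>{n..m}. A * B * \<rho> ^ n)"
  proof (rule sum_mono)
    fix j assume j: "j \<in> {n..m}"
    have "\<rho> ^ j \<le> \<rho> ^ n" by (rule power_decreasing) (use j rho in auto)
    hence "B * \<rho> ^ j \<le> B * \<rho> ^ n" using B0 by (rule mult_left_mono)
    hence "\<bar>\<psi> j\<bar> \<le> B * \<rho> ^ n"
      using psi[rule_format, of j] by linarith
    moreover have "\<bar>a (m - j)\<bar> \<le> A" using A by simp
    ultimately have "\<bar>\<psi> j\<bar> * \<bar>a (m - j)\<bar> \<le> (B * \<rho> ^ n) * A"
      by (intro mult_mono) auto
    thus "\<bar>\<psi> j * a (m - j)\<bar> \<le> A * B * \<rho> ^ n"
      by (simp add: abs_mult mult_ac)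
  qed
  also have "\<dots> = real (Suc m - n) * (A * B * \<rho> ^ n)" by simp
  also have "\<dots> \<le> real p * (A * B * \<rho> ^ n)"
  proof (rule mult_right_mono)
    show "real (Suc m - n) \<le> real p" using nm by simp
    have "0 \<le> A" using A[rule_format, of 0] by simp
    thus "0 \<le> A * B * \<rho> ^ n" using B0 rho by simp
  qed
  finally show ?thesis using eq by (simp add: mult.assoc)
qed

lemma pow_diff_bound:
  fixes u v :: real and r :: nat
  assumes "0 \<le> u" "0 \<le> v"
  shows "\<bar>u ^ r - v ^ r\<bar> \<le> real r * \<bar>u - v\<bar> * (u + v) ^ (r - 1)"
proof -
  have key: "x ^ r - y ^ r \<le> real r * (x - y) * (x + y) ^ (r - 1)" if "0 \<le> y" "y \<le> x" for x y :: real
  proof -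
    have "x ^ r - y ^ r = (x - y) * (\<Sum>i<r. y ^ (r - Suc i) * x ^ i)" by (rule power_diff_sumr2)
    also have "(\<Sum>i<r. y ^ (r - Suc i) * x ^ i) \<le> (\<Sum>i<r. (x + y) ^ (r - 1))"
    proof (rule sum_mono)
      fix i assume i: "i \<in> {..<r}"
      have "y ^ (r - Suc i) * x ^ i \<le> (x + y) ^ (r - Suc i) * (x + y) ^ i"
        using that by (intro mult_mono power_mono) auto
      also have "\<dots> = (x + y) ^ (r - 1)" using i by (simp add: power_add[symmetric])
      finally show "y ^ (r - Suc i) * x ^ i \<le> (x + y) ^ (r - 1)" .
    qed
    hence "(x - y) * (\<Sum>i<r. y ^ (r - Suc i) * x ^ i) \<le> (x - y) * (\<Sum>i<r. (x + y) ^ (r - 1))"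
      using that by (intro mult_left_mono) auto
    finally show ?thesis by (simp add: mult_ac)
  qed
  show ?thesis
  proof (cases "v \<le> u")
    case True
    have "v ^ r \<le> u ^ r" using True assms by (intro power_mono) auto
    thus ?thesis using key[of v u] True assms by simp
  next
    case False
    have "u ^ r \<le> v ^ r" using False assms by (intro power_mono) auto
    thus ?thesis using key[of u v] False assms by (simp add: abs_minus_commute add.commute)
  qed
qed

lemma sum_pow_bound:
  fixes f :: "'b \<Rightarrow> real"
  assumes "finite I" "I \<noteq> {}" "\<And>i. i \<in> I \<Longrightarrow> 0 \<le> f i"
  shows "(\<Sum>i\<in>I. f i) ^ k \<le> real (card I) ^ k * (\<Sum>i\<in>I. f i ^ k)"
proof -
  define Mx where "Mx = Max (f ` I)"
  have "Mx \<in> f ` I" unfolding Mx_def using assms by (intro Max_in) auto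
  then obtain i0 where i0: "i0 \<in> I" "f i0 = Mx" by auto
  have le: "f i \<le> Mx" if "i \<in> I" for i unfolding Mx_def using assms that by auto
  have "(\<Sum>i\<in>I. f i) \<le> (\<Sum>i\<in>I. Mx)" using le by (rule sum_mono)
  hence "(\<Sum>i\<in>I. f i) \<le> real (card I) * Mx" by simp
  hence "(\<Sum>i\<in>I. f i) ^ k \<le> (real (card I) * Mx) ^ k"
    using assms by (intro power_mono) (auto intro: sum_nonneg)
  also have "\<dots> = real (card I) ^ k * Mx ^ k" by (simp add: power_mult_distrib)
  also have "Mx ^ k \<le> (\<Sum>i\<in>I. f i ^ k)"
    unfolding i0(2)[symmetric] by (rule member_le_sum) (use i0 assms in auto)
  hence "real (card I) ^ k * Mx ^ k \<le> real (card I) ^ k * (\<Sum>i\<in>I. f i ^ k)"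
    by (intro mult_left_mono) auto
  finally show ?thesis .
qed

lemma integrable_prod_sq:
  fixes f g :: "'a \<Rightarrow> real"
  assumes [measurable]: "f \<in> borel_measurable M" "g \<in> borel_measurable M"
    and "integrable M (\<lambda>x. (f x)\<^sup>2)" "integrable M (\<lambda>x. (g x)\<^sup>2)"
  shows "integrable M (\<lambda>x. f x * g x)"
proof (rule Bochner_Integration.integrable_bound)
  show "integrable M (\<lambda>x. (f x)\<^sup>2 + (g x)\<^sup>2)" using assms by auto
  show "(\<lambda>x. f x * g x) \<in> borel_measurable M" by measurable
  show "AE x in M. norm (f x * g x) \<le> norm ((f x)\<^sup>2 + (g x)\<^sup>2)"
  proof (rule AE_I2)
    fix x
    have "2 * (\<bar>f x\<bar> * \<bar>g x\<bar>) \<le> (f x)\<^sup>2 + (g x)\<^sup>2"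
      using sum_squares_bound[of "\<bar>f x\<bar>" "\<bar>g x\<bar>"] by (simp add: mult.assoc)
    moreover have "\<bar>f x\<bar> * \<bar>g x\<bar> \<ge> 0" by simp
    ultimately have "\<bar>f x\<bar> * \<bar>g x\<bar> \<le> (f x)\<^sup>2 + (g x)\<^sup>2" by linarith
    thus "norm (f x * g x) \<le> norm ((f x)\<^sup>2 + (g x)\<^sup>2)"
      by (simp add: abs_mult)
  qed
qed

lemma sq_diff_integrable:
  fixes f g :: "'a \<Rightarrow> real"
  assumes [measurable]: "f \<in> borel_measurable M" "g \<in> borel_measurable M"
    and "integrable M (\<lambda>x. (f x)\<^sup>2)" "integrable M (\<lambda>x. (g x)\<^sup>2)"
  shows "integrable M (\<lambda>x. (f x - g x)\<^sup>2)"
proof -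
  have "integrable M (\<lambda>x. (f x)\<^sup>2 - 2 * (f x * g x) + (g x)\<^sup>2)"
    using assms integrable_prod_sq[OF assms] by auto
  moreover have "(\<lambda>x. (f x - g x)\<^sup>2) = (\<lambda>x. (f x)\<^sup>2 - 2 * (f x * g x) + (g x)\<^sup>2)"
    by (rule ext) (simp add: power2_eq_square algebra_simps)
  ultimately show ?thesis by simp
qed

lemma cond_exp_L2_opt:
  fixes Y Z :: "'a \<Rightarrow> real"
  assumes "prob_space M" "subalgebra M F"
    and Ym[measurable]: "Y \<in> borel_measurable M" and Y2: "integrable M (\<lambda>\<omega>. (Y \<omega>)\<^sup>2)"
    and ZF: "Z \<in> borel_measurable F" and Z2: "integrable M (\<lambda>\<omega>. (Z \<omega>)\<^sup>2)"
  shows "(\<integral>\<omega>. (Y \<omega> - real_cond_exp M F Y \<omega>)\<^sup>2 \<partial>M) \<le> (\<integral>\<omega>. (Y \<omega> - Z \<omega>)\<^sup>2 \<partial>M)"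
proof -
  interpret prob_space M by fact
  interpret finite_measure_subalgebra M F by unfold_locales (rule assms)
  define C where "C = real_cond_exp M F Y"
  have CF: "C \<in> borel_measurable F" unfolding C_def by simp
  have [measurable]: "C \<in> borel_measurable M" using CF measurable_from_subalg[OF subalg] by blast
  have [measurable]: "Z \<in> borel_measurable M" using ZF measurable_from_subalg[OF subalg] by blast
  have Yi: "integrable M Y" by (rule square_integrable_imp_integrable) (use Y2 in auto)
  have C2: "integrable M (\<lambda>x. (C x)\<^sup>2)" unfolding C_def
    by (rule integrable_convex_cond_exp[where I = UNIV]) (use Yi Y2 convex_power2 in auto)
  define W where "W x = C x - Z x" for x
  have WF: "W \<in> borel_measurable F" unfolding W_def using CF ZF by measurable
  have [measurable]: "W \<in> borel_measurable M" unfolding W_def by measurable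
  have W2: "integrable M (\<lambda>x. (W x)\<^sup>2)" unfolding W_def by (rule sq_diff_integrable) (use C2 Z2 in auto)
  have WY: "integrable M (\<lambda>x. W x * Y x)" by (rule integrable_prod_sq) (use W2 Y2 in auto)
  have WC: "integrable M (\<lambda>x. W x * C x)" by (rule integrable_prod_sq) (use W2 C2 in auto)
  have orth: "(\<integral>x. W x * C x \<partial>M) = (\<integral>x. W x * Y x \<partial>M)"
    unfolding C_def by (rule real_cond_exp_intg(2)) (use WY WF in auto)
  have YC2: "integrable M (\<lambda>x. (Y x - C x)\<^sup>2)" by (rule sq_diff_integrable) (use Y2 C2 in auto)
  have eq: "(Y x - Z x)\<^sup>2 = (Y x - C x)\<^sup>2 + (2 * (W x * Y x) - 2 * (W x * C x) + (W x)\<^sup>2)" for x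
    unfolding W_def by (simp add: power2_eq_square algebra_simps)
  have "(\<integral>x. (Y x - Z x)\<^sup>2 \<partial>M) = (\<integral>x. (Y x - C x)\<^sup>2 \<partial>M) + (2 * (\<integral>x. W x * Y x \<partial>M) - 2 * (\<integral>x. W x * C x \<partial>M) + (\<integral>x. (W x)\<^sup>2 \<partial>M))"
    unfolding eq using YC2 WY WC W2 by simp
  also have "\<dots> = (\<integral>x. (Y x - C x)\<^sup>2 \<partial>M) + (\<integral>x. (W x)\<^sup>2 \<partial>M)" using orth by simp
  also have "\<dots> \<ge> (\<integral>x. (Y x - C x)\<^sup>2 \<partial>M)" by simp
  finally show ?thesis unfolding C_def .
qed

lemma shift_meas: 
  assumes "\<forall>t. X t \<in> borel_measurable M"
  shows "(\<lambda>\<omega> t. X (t + h) \<omega>) \<in> measurable M (Pi\<^sub>M UNIV (\<lambda>_. borel))"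
  using assms by (intro measurable_PiM_single') auto

lemma stationary_abs_pow:
  assumes "stationary_proc M X"
  shows "stationary_proc M (\<lambda>t \<omega>. \<bar>X t \<omega>\<bar> ^ r)"
proof -
  have Xm: "\<forall>t. X t \<in> borel_measurable M" and st: "\<And>h. distr M (Pi\<^sub>M UNIV (\<lambda>_. borel)) (\<lambda>\<omega> t. X (t + h) \<omega>)
             = distr M (Pi\<^sub>M UNIV (\<lambda>_. borel)) (\<lambda>\<omega> t. X t \<omega>)"
    using assms unfolding stationary_proc_def by auto
  let ?P = "Pi\<^sub>M (UNIV::int set) (\<lambda>_. (borel::real measure))"
  have gm: "(\<lambda>f t. \<bar>f t\<bar> ^ r) \<in> measurable ?P ?P"
    by (intro measurable_PiM_single') auto
  have eq: "distr M ?P (\<lambda>\<omega> t. \<bar>X (t + h) \<omega>\<bar> ^ r) = distr (distr M ?P (\<lambda>\<omega> t. X (t + h) \<omega>)) ?P (\<lambda>f t. \<bar>f t\<bar> ^ r)" for h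
    by (subst distr_distr[OF gm shift_meas[OF Xm]]) (simp add: comp_def)
  show ?thesis
    unfolding stationary_proc_def
  proof (intro conjI allI)
    fix t
    have [measurable]: "X t \<in> borel_measurable M" using Xm by simp
    show "(\<lambda>\<omega>. \<bar>X t \<omega>\<bar> ^ r) \<in> borel_measurable M" by measurable
  next
    fix h
    show "distr M ?P (\<lambda>\<omega> t. \<bar>X (t + h) \<omega>\<bar> ^ r) = distr M ?P (\<lambda>\<omega> t. \<bar>X t \<omega>\<bar> ^ r)"
      using eq[of h] eq[of 0] st[of h] by simp
  qed
qed

lemma stationary_integral:
  fixes g :: "real \<Rightarrow> real"
  assumes "stationary_proc M X" and g[measurable]: "g \<in> borel_measurable borel"
    and int0: "integrable M (\<lambda>\<omega>. g (X 0 \<omega>))"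
  shows "integrable M (\<lambda>\<omega>. g (X t \<omega>))" "(\<integral>\<omega>. g (X t \<omega>) \<partial>M) = (\<integral>\<omega>. g (X 0 \<omega>) \<partial>M)"
proof -
  have Xm: "\<forall>t. X t \<in> borel_measurable M" and st: "\<And>h. distr M (Pi\<^sub>M UNIV (\<lambda>_. borel)) (\<lambda>\<omega> t. X (t + h) \<omega>)
             = distr M (Pi\<^sub>M UNIV (\<lambda>_. borel)) (\<lambda>\<omega> t. X t \<omega>)"
    using assms unfolding stationary_proc_def by auto
  let ?P = "Pi\<^sub>M (UNIV::int set) (\<lambda>_. (borel::real measure))"
  have Gm: "(\<lambda>f. g (f 0)) \<in> borel_measurable ?P" by measurable
  have sm: "(\<lambda>\<omega> s. X (s + h) \<omega>) \<in> measurable M ?P" for h by (rule shift_meas[OF Xm])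
  have I1: "integrable (distr M ?P (\<lambda>\<omega> s. X (s + h) \<omega>)) (\<lambda>f. g (f 0)) \<longleftrightarrow> integrable M (\<lambda>\<omega>. g (X h \<omega>))" for h
    using integrable_distr_eq[OF sm Gm, of h] by simp
  have I2: "integral\<^sup>L (distr M ?P (\<lambda>\<omega> s. X (s + h) \<omega>)) (\<lambda>f. g (f 0)) = (\<integral>\<omega>. g (X h \<omega>) \<partial>M)" for h
    using integral_distr[OF sm Gm, of h] by simp
  show "integrable M (\<lambda>\<omega>. g (X t \<omega>))" using I1[of t] I1[of 0] st[of t] st[of 0] int0 by simp
  show "(\<integral>\<omega>. g (X t \<omega>) \<partial>M) = (\<integral>\<omega>. g (X 0 \<omega>) \<partial>M)"
    using I2[of t] I2[of 0] st[of t] st[of 0] by simp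
qed

lemma gen_sigma_props:
  assumes em: "\<forall>t. e t \<in> borel_measurable M"
  shows "subalgebra M (gen_sigma M e s t)"
    and "\<And>u. s \<le> u \<Longrightarrow> u \<le> t \<Longrightarrow> e u \<in> borel_measurable (gen_sigma M e s t)"
proof -
  let ?G = "{e u -` B \<inter> space M | u B. s \<le> u \<and> u \<le> t \<and> B \<in> sets borel}"
  have GP: "?G \<subseteq> Pow (space M)" by auto
  have sp: "space (gen_sigma M e s t) = space M" unfolding gen_sigma_def using GP by simp
  have st: "sets (gen_sigma M e s t) = sigma_sets (space M) ?G" unfolding gen_sigma_def using GP by simp
  have GM: "?G \<subseteq> sets M" using em by (auto intro!: measurable_sets)
  show "subalgebra M (gen_sigma M e s t)"
    unfolding subalgebra_def sp st using sets.sigma_sets_subset[OF GM] by simp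
  fix u assume u: "s \<le> u" "u \<le> t"
  show "e u \<in> borel_measurable (gen_sigma M e s t)"
    unfolding measurable_def sp st
  proof (intro CollectI conjI ballI)
    show "e u \<in> space M \<rightarrow> space borel" by simp
    fix B :: "real set" assume "B \<in> sets borel"
    hence "e u -` B \<inter> space M \<in> ?G" using u by blast
    thus "e u -` B \<inter> space M \<in> sigma_sets (space M) ?G" by (rule sigma_sets.Basic)
  qed
qed

lemma pw_bound:
  fixes x0 s R W Dc \<rho>n :: real and r :: nat
  assumes s: "s = x0 + R" and Rb: "\<bar>R\<bar> \<le> Dc * \<rho>n * W" and xW: "\<bar>x0\<bar> \<le> W"
    and rn: "0 \<le> \<rho>n" "\<rho>n \<le> 1" and Dc: "1 \<le> Dc" and r: "0 < r"
  shows "(\<bar>x0\<bar> ^ r - \<bar>s\<bar> ^ r)\<^sup>2 \<le> (real r * Dc * (2 + Dc) ^ (r - 1))\<^sup>2 * \<rho>n\<^sup>2 * W ^ (2 * r)"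
proof -
  have W0: "0 \<le> W" using xW by linarith
  have "\<bar>\<bar>x0\<bar> ^ r - \<bar>s\<bar> ^ r\<bar> \<le> real r * \<bar>\<bar>x0\<bar> - \<bar>s\<bar>\<bar> * (\<bar>x0\<bar> + \<bar>s\<bar>) ^ (r - 1)"
    by (rule pow_diff_bound) auto
  also have "\<dots> \<le> real r * (Dc * \<rho>n * W) * ((2 + Dc) * W) ^ (r - 1)"
  proof (intro mult_mono power_mono)
    show "\<bar>\<bar>x0\<bar> - \<bar>s\<bar>\<bar> \<le> Dc * \<rho>n * W" using Rb s by linarith
    have "Dc * \<rho>n * W \<le> Dc * 1 * W" using rn Dc W0 by (intro mult_mono) auto
    thus "\<bar>x0\<bar> + \<bar>s\<bar> \<le> (2 + Dc) * W" using Rb s xW by (simp add: algebra_simps)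
  qed (use rn Dc W0 in auto)
  also have "\<dots> = real r * Dc * (2 + Dc) ^ (r - 1) * \<rho>n * (W * W ^ (r - 1))"
    by (simp add: power_mult_distrib mult_ac)
  also have "W * W ^ (r - 1) = W ^ r" using r by (simp add: power_eq_if)
  finally have ab: "\<bar>\<bar>x0\<bar> ^ r - \<bar>s\<bar> ^ r\<bar> \<le> real r * Dc * (2 + Dc) ^ (r - 1) * \<rho>n * W ^ r" .
  have "(\<bar>x0\<bar> ^ r - \<bar>s\<bar> ^ r)\<^sup>2 = \<bar>\<bar>x0\<bar> ^ r - \<bar>s\<bar> ^ r\<bar>\<^sup>2" by simp
  also have "\<dots> \<le> (real r * Dc * (2 + Dc) ^ (r - 1) * \<rho>n * W ^ r)\<^sup>2"
    by (rule power_mono[OF ab]) simp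
  also have "\<dots> = (real r * Dc * (2 + Dc) ^ (r - 1))\<^sup>2 * \<rho>n\<^sup>2 * W ^ (2 * r)"
    by (simp add: power_mult_distrib power_mult[symmetric] mult.commute)
  finally show ?thesis .
qed

theorem lemma3:
  fixes M :: "'a measure"
    and X \<epsilon> :: "int \<Rightarrow> 'a \<Rightarrow> real"
    and \<phi> \<theta> :: "nat \<Rightarrow> real"
    and p0 q0 r :: nat
  assumes "prob_space M"
    and "p0 \<ge> 1"
    and "\<phi> p0 \<noteq> 0"
    and "q0 > 0 \<longrightarrow> \<theta> q0 \<noteq> 0"
    and "\<not> (\<exists>z. lagpoly \<phi> p0 z = 0 \<and> lagpoly \<theta> q0 z = 0)"
    and "\<forall>z. cmod z \<le> 1 \<longrightarrow> lagpoly \<phi> p0 z \<noteq> 0"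
    and "stationary_proc M X"
    and "\<forall>t. \<epsilon> t \<in> borel_measurable M"
    and "\<forall>t. integrable M (\<lambda>\<omega>. (\<epsilon> t \<omega>)\<^sup>2)"
    and "\<forall>t. (\<integral>\<omega>. \<epsilon> t \<omega> \<partial>M) = 0"
    and "\<forall>t. AE \<omega> in M. X t \<omega> + (\<Sum>j=1..p0. \<phi> j * X (t - int j) \<omega>)
                        = \<epsilon> t \<omega> + (\<Sum>j=1..q0. \<theta> j * \<epsilon> (t - int j) \<omega>)"
    and "r > 0"
    and "integrable M (\<lambda>\<omega>. \<bar>X 0 \<omega>\<bar> ^ (2 * r))"
  shows "geom_L2_NED M (\<lambda>t \<omega>. \<bar>X t \<omega>\<bar> ^ r) \<epsilon>"
proof -
  interpret P: prob_space M by (rule assms(1))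
  define a where "a k = (if k = 0 then 1 else if k \<le> p0 then \<phi> k else 0)" for k
  obtain \<psi> B \<rho> where rho: "0 < \<rho>" "\<rho> < 1" and B0: "0 \<le> B" and psi: "\<forall>j. \<bar>\<psi> j\<bar> \<le> B * \<rho> ^ j"
    and conv: "\<forall>m. (\<Sum>j\<le>m. \<psi> j * a (m - j)) = (if m = 0 then 1 else 0)"
    using ar_inverse[OF assms(6), of a] a_def by blast
  define A where "A = 1 + (\<Sum>k\<le>p0. \<bar>\<phi> k\<bar>)"
  have Ab: "\<forall>k. \<bar>a k\<bar> \<le> A"
  proof
    fix k
    have s0: "0 \<le> (\<Sum>k\<le>p0. \<bar>\<phi> k\<bar>)" by (rule sum_nonneg) simp
    show "\<bar>a k\<bar> \<le> A"
    proof (cases "k = 0 \<or> k > p0")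
      case True thus ?thesis using s0 by (auto simp: a_def A_def)
    next
      case False
      hence "\<bar>\<phi> k\<bar> \<le> (\<Sum>k\<le>p0. \<bar>\<phi> k\<bar>)" by (intro member_le_sum) auto
      thus ?thesis using False by (auto simp: a_def A_def)
    qed
  qed
  have a0: "\<forall>k>p0. a k = 0" by (simp add: a_def)
  define Dc where "Dc = max 1 (real p0 * A * B)"
  have Dc1: "1 \<le> Dc" by (simp add: Dc_def)
  define E0 where "E0 = (\<integral>\<omega>. \<bar>X 0 \<omega>\<bar> ^ (2 * r) \<partial>M)"
  define u where "u t \<omega> = \<epsilon> t \<omega> + (\<Sum>i=1..q0. \<theta> i * \<epsilon> (t - int i) \<omega>)" for t \<omega>
  have Xm: "\<forall>t. X t \<in> borel_measurable M" using assms(7) by (simp add: stationary_proc_def)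
  have gm: "(\<lambda>x::real. \<bar>x\<bar> ^ (2 * r)) \<in> borel_measurable borel" by measurable
  have Xint: "integrable M (\<lambda>\<omega>. \<bar>X t \<omega>\<bar> ^ (2 * r))" for t
    using stationary_integral(1)[OF assms(7) gm] assms(13) by simp
  have Xeq: "(\<integral>\<omega>. \<bar>X t \<omega>\<bar> ^ (2 * r) \<partial>M) = E0" for t
    using stationary_integral(2)[OF assms(7) gm] assms(13) by (simp add: E0_def)
  have E0nn: "0 \<le> E0" unfolding E0_def by (rule integral_nonneg_AE) simp
  have AEar: "AE \<omega> in M. \<forall>t. X t \<omega> + (\<Sum>j=1..p0. \<phi> j * X (t - int j) \<omega>) = u t \<omega>"
    using assms(11) by (simp add: u_def AE_all_countable)
  define c1 where "c1 = real r * Dc * (2 + Dc) ^ (r - 1)"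
  have c1nn: "0 \<le> c1" using Dc1 by (simp add: c1_def)
  define c3 where "c3 = c1 * sqrt ((real p0 + 1) ^ (2 * r) * ((real p0 + 1) * E0))"
  have c3nn: "0 \<le> c3" using c1nn E0nn by (simp add: c3_def)
  define K where "K = (c3 + sqrt E0) / \<rho> ^ q0"
  have sqpow: "(\<bar>x\<bar> ^ r)\<^sup>2 = \<bar>x\<bar> ^ (2 * r)" for x :: real
    by (simp add: power_mult[symmetric] mult.commute)
  have main: "ned_err M (\<lambda>t \<omega>. \<bar>X t \<omega>\<bar> ^ r) \<epsilon> k \<le> K * \<rho> ^ k" for k
  proof -
    let ?F = "gen_sigma M \<epsilon> (- int k) (int k)"
    have sub: "subalgebra M ?F" by (rule gen_sigma_props(1)[OF assms(8)])
    have [measurable]: "X t \<in> borel_measurable M" for t using Xm by simp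
    have Y0m: "(\<lambda>\<omega>. \<bar>X 0 \<omega>\<bar> ^ r) \<in> borel_measurable M" by measurable
    have Y02: "integrable M (\<lambda>\<omega>. (\<bar>X 0 \<omega>\<bar> ^ r)\<^sup>2)" unfolding sqpow by (rule Xint)
    have opt: "ned_err M (\<lambda>t \<omega>. \<bar>X t \<omega>\<bar> ^ r) \<epsilon> k \<le> sqrt (\<integral>\<omega>. (\<bar>X 0 \<omega>\<bar> ^ r - Z \<omega>)\<^sup>2 \<partial>M)"
      if "Z \<in> borel_measurable ?F" "integrable M (\<lambda>\<omega>. (Z \<omega>)\<^sup>2)" for Z
      unfolding ned_err_def
      using cond_exp_L2_opt[OF assms(1) sub Y0m Y02 that] by simp
    show ?thesis
    proof (cases "k < q0")
      case True
      have "ned_err M (\<lambda>t \<omega>. \<bar>X t \<omega>\<bar> ^ r) \<epsilon> k \<le> sqrt (\<integral>\<omega>. (\<bar>X 0 \<omega>\<bar> ^ r - (\<lambda>_. 0) \<omega>)\<^sup>2 \<partial>M)"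
        by (rule opt) auto
      also have "\<dots> = sqrt E0" by (simp add: sqpow E0_def)
      also have "\<dots> \<le> K * \<rho> ^ k"
      proof -
        have "\<rho> ^ q0 \<le> \<rho> ^ k" using True rho by (intro power_decreasing) auto
        hence "1 \<le> \<rho> ^ k / \<rho> ^ q0" using rho by simp
        hence "sqrt E0 * 1 \<le> (c3 + sqrt E0) * (\<rho> ^ k / \<rho> ^ q0)"
          using c3nn E0nn by (intro mult_mono) auto
        thus ?thesis by (simp add: K_def)
      qed
      finally show ?thesis .
    next
      case False
      define n where "n = k + 1 - q0"
      have n1: "1 \<le> n" and nk: "n + q0 = k + 1" using False by (auto simp: n_def)
      define S where "S \<omega> = (\<Sum>j<n. \<psi> j * u (- int j) \<omega>)" for \<omega>
      define R where "R \<omega> = (\<Sum>m\<in>{n..<n+p0}. (\<Sum>j<n. \<psi> j * a (m - j)) * X (- int m) \<omega>)" for \<omega>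
      define I where "I = insert 0 {n..<n+p0}"
      have I0: "0 \<notin> {n..<n+p0}" using n1 by auto
      have cardI: "card I = p0 + 1" using I0 by (simp add: I_def)
      define V where "V \<omega> = (\<Sum>m\<in>I. \<bar>X (- int m) \<omega>\<bar>)" for \<omega>
      have epsF: "\<epsilon> v \<in> borel_measurable ?F" if "- int k \<le> v" "v \<le> int k" for v
        using gen_sigma_props(2)[OF assms(8) that] .
      have SF: "S \<in> borel_measurable ?F"
        unfolding S_def u_def
        by (intro borel_measurable_sum borel_measurable_times borel_measurable_add borel_measurable_const epsF)
           (auto simp: n_def)
      have ZF: "(\<lambda>\<omega>. \<bar>S \<omega>\<bar> ^ r) \<in> borel_measurable ?F"
        using SF by measurable
      have SM[measurable]: "S \<in> borel_measurable M" using SF measurable_from_subalg[OF sub] by blast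
      define G where "G \<omega> = c1\<^sup>2 * (\<rho> ^ n)\<^sup>2 * ((real p0 + 1) ^ (2 * r) * (\<Sum>m\<in>I. \<bar>X (- int m) \<omega>\<bar> ^ (2 * r)))" for \<omega>
      have pw: "AE \<omega> in M. (\<bar>X 0 \<omega>\<bar> ^ r - \<bar>S \<omega>\<bar> ^ r)\<^sup>2 \<le> G \<omega>"
      proof (rule AE_mp[OF AEar], rule AE_I2, rule impI)
        fix \<omega> assume ar: "\<forall>t. X t \<omega> + (\<Sum>j=1..p0. \<phi> j * X (t - int j) \<omega>) = u t \<omega>"
        have veq: "\<forall>j<n. u (- int j) \<omega> = (\<Sum>i\<le>p0. a i * X (- int (j + i)) \<omega>)"
        proof (intro allI impI)
          fix j
          have "(\<Sum>i\<le>p0. a i * X (- int (j + i)) \<omega>) = a 0 * X (- int (j + 0)) \<omega> + (\<Sum>i=1..p0. a i * X (- int (j + i)) \<omega>)"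
            by (simp add: sum.atMost_shift atMost_atLeast0 sum.atLeast_Suc_atMost)
          also have "(\<Sum>i=1..p0. a i * X (- int (j + i)) \<omega>) = (\<Sum>i=1..p0. \<phi> i * X (- int j - int i) \<omega>)"
          proof (rule sum.cong[OF refl])
            fix i assume i: "i \<in> {1..p0}"
            have e1: "a i = \<phi> i" using i by (simp add: a_def)
            have e2: "- int (j + i) = - int j - int i" by simp
            show "a i * X (- int (j + i)) \<omega> = \<phi> i * X (- int j - int i) \<omega>"
              by (simp only: e1 e2)
          qed
          finally show "u (- int j) \<omega> = (\<Sum>i\<le>p0. a i * X (- int (j + i)) \<omega>)"
            using ar[rule_format, of "- int j"] by (simp add: a_def)
        qed
        have expand: "S \<omega> = X 0 \<omega> + R \<omega>"
          using ar_expand[OF a0 conv, where y = "\<lambda>m. X (- int m) \<omega>" and v = "\<lambda>j. u (- int j) \<omega>" and n = n] veq n1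
          unfolding S_def R_def by simp
        have Db: "\<bar>\<Sum>j<n. \<psi> j * a (m - j)\<bar> \<le> Dc * \<rho> ^ n" if "m \<in> {n..<n+p0}" for m
        proof -
          have "\<bar>\<Sum>j<n. \<psi> j * a (m - j)\<bar> \<le> real p0 * A * B * \<rho> ^ n"
            by (rule D_bound[OF conv psi _ _ Ab]) (use rho that n1 in auto)
          also have "\<dots> \<le> Dc * \<rho> ^ n" using rho by (intro mult_right_mono) (auto simp: Dc_def)
          finally show ?thesis .
        qed
        have "\<bar>R \<omega>\<bar> \<le> (\<Sum>m\<in>{n..<n+p0}. \<bar>(\<Sum>j<n. \<psi> j * a (m - j)) * X (- int m) \<omega>\<bar>)"
          unfolding R_def by (rule sum_abs)
        also have "\<dots> \<le> (\<Sum>m\<in>{n..<n+p0}. Dc * \<rho> ^ n * \<bar>X (- int m) \<omega>\<bar>)"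
          by (rule sum_mono) (auto simp: abs_mult intro!: mult_right_mono Db)
        also have "\<dots> = Dc * \<rho> ^ n * (\<Sum>m\<in>{n..<n+p0}. \<bar>X (- int m) \<omega>\<bar>)"
          by (simp add: sum_distrib_left)
        also have "\<dots> \<le> Dc * \<rho> ^ n * V \<omega>"
          using I0 Dc1 rho by (intro mult_left_mono) (auto simp: V_def I_def)
        finally have Rb: "\<bar>R \<omega>\<bar> \<le> Dc * \<rho> ^ n * V \<omega>" .
        have xV: "\<bar>X 0 \<omega>\<bar> \<le> V \<omega>" using I0 by (simp add: V_def I_def sum_nonneg)
        have "(\<bar>X 0 \<omega>\<bar> ^ r - \<bar>S \<omega>\<bar> ^ r)\<^sup>2 \<le> c1\<^sup>2 * (\<rho> ^ n)\<^sup>2 * V \<omega> ^ (2 * r)"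
          unfolding c1_def
          by (rule pw_bound[OF expand Rb xV]) (use rho Dc1 assms(12) in \<open>auto intro: power_le_one\<close>)
        also have "V \<omega> ^ (2 * r) \<le> real (card I) ^ (2 * r) * (\<Sum>m\<in>I. \<bar>X (- int m) \<omega>\<bar> ^ (2 * r))"
          unfolding V_def by (rule sum_pow_bound) (auto simp: I_def)
        hence "c1\<^sup>2 * (\<rho> ^ n)\<^sup>2 * V \<omega> ^ (2 * r) \<le> c1\<^sup>2 * (\<rho> ^ n)\<^sup>2 * (real (card I) ^ (2 * r) * (\<Sum>m\<in>I. \<bar>X (- int m) \<omega>\<bar> ^ (2 * r)))"
          by (intro mult_left_mono) auto
        finally show "(\<bar>X 0 \<omega>\<bar> ^ r - \<bar>S \<omega>\<bar> ^ r)\<^sup>2 \<le> G \<omega>"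
          by (simp add: G_def cardI add.commute)
      qed
      have Gint: "integrable M G" unfolding G_def using Xint by auto
      have Gval: "(\<integral>\<omega>. G \<omega> \<partial>M) = c1\<^sup>2 * (\<rho> ^ n)\<^sup>2 * ((real p0 + 1) ^ (2 * r) * ((real p0 + 1) * E0))"
        unfolding G_def using Xint Xeq cardI by (simp add: integral_sum)
      have Dm: "(\<lambda>\<omega>. (\<bar>X 0 \<omega>\<bar> ^ r - \<bar>S \<omega>\<bar> ^ r)\<^sup>2) \<in> borel_measurable M" by measurable
      have Dint: "integrable M (\<lambda>\<omega>. (\<bar>X 0 \<omega>\<bar> ^ r - \<bar>S \<omega>\<bar> ^ r)\<^sup>2)"
        by (rule Bochner_Integration.integrable_bound[OF Gint Dm]) (use pw in \<open>eventually_elim, auto intro: order_trans[OF _ abs_ge_self]\<close>)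
      have Z2: "integrable M (\<lambda>\<omega>. (\<bar>S \<omega>\<bar> ^ r)\<^sup>2)"
      proof -
        have "integrable M (\<lambda>\<omega>. (\<bar>X 0 \<omega>\<bar> ^ r - (\<bar>X 0 \<omega>\<bar> ^ r - \<bar>S \<omega>\<bar> ^ r))\<^sup>2)"
          by (rule sq_diff_integrable) (use Y02 Dint in auto)
        thus ?thesis by simp
      qed
      have "ned_err M (\<lambda>t \<omega>. \<bar>X t \<omega>\<bar> ^ r) \<epsilon> k \<le> sqrt (\<integral>\<omega>. (\<bar>X 0 \<omega>\<bar> ^ r - \<bar>S \<omega>\<bar> ^ r)\<^sup>2 \<partial>M)"
        by (rule opt[OF ZF Z2])
      also have "\<dots> \<le> sqrt (\<integral>\<omega>. G \<omega> \<partial>M)"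
        by (intro real_sqrt_le_mono integral_mono_AE Dint Gint pw)
      also have "\<dots> = c3 * \<rho> ^ n"
        unfolding Gval c3_def using c1nn rho by (simp add: real_sqrt_mult)
      also have "\<dots> \<le> K * \<rho> ^ k"
      proof -
        have "\<rho> ^ n * \<rho> ^ q0 \<le> \<rho> ^ k"
          using rho nk by (simp add: power_add[symmetric])
        hence "\<rho> ^ n \<le> \<rho> ^ k / \<rho> ^ q0" using rho by (simp add: field_simps)
        hence "c3 * \<rho> ^ n \<le> (c3 + sqrt E0) * (\<rho> ^ k / \<rho> ^ q0)"
          using c3nn E0nn rho by (intro mult_mono) auto
        thus ?thesis by (simp add: K_def)
      qed
      finally show ?thesis .
    qed
  qed
  show ?thesis
    unfolding geom_L2_NED_def
  proof (intro exI conjI)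
    show "0 < - ln \<rho>" using rho by simp
    show "L2_NED M (\<lambda>t \<omega>. \<bar>X t \<omega>\<bar> ^ r) \<epsilon> (\<lambda>k. K * \<rho> ^ k)"
      unfolding L2_NED_def
    proof (intro conjI allI)
      show "stationary_proc M (\<lambda>t \<omega>. \<bar>X t \<omega>\<bar> ^ r)" by (rule stationary_abs_pow[OF assms(7)])
      show "integrable M (\<lambda>\<omega>. (\<bar>X 0 \<omega>\<bar> ^ r)\<^sup>2)" unfolding sqpow by (rule Xint)
      show "ned_err M (\<lambda>t \<omega>. \<bar>X t \<omega>\<bar> ^ r) \<epsilon> k \<le> K * \<rho> ^ k" for k by (rule main)
      show "(\<lambda>k. K * \<rho> ^ k) \<longlonglongrightarrow> 0"
        by (intro tendsto_mult_right_zero LIMSEQ_power_zero) (use rho in auto)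
    qed
    have "exp (- (- ln \<rho>) * real k) = \<rho> ^ k" for k
    proof -
      have "exp (- (- ln \<rho>) * real k) = exp (real k * ln \<rho>)" by (simp add: mult.commute)
      also have "\<dots> = exp (ln \<rho>) ^ k" by (rule exp_of_nat_mult)
      also have "\<dots> = \<rho> ^ k" using rho by simp
      finally show ?thesis .
    qed
    hence eq: "(\<lambda>k. exp (- (- ln \<rho>) * real k)) = (\<lambda>k. \<rho> ^ k)" by auto
    show "(\<lambda>k. K * \<rho> ^ k) \<in> O(\<lambda>k. exp (- (- ln \<rho>) * real k))"
      unfolding eq by (intro bigoI[of _ "\<bar>K\<bar>"] always_eventually) (auto simp: abs_mult)
  qed
qed

end
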